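(* Let $X$ be a compact metric space, $f\colon X\to X$ continuous, and $\bar x=(x_i)_{i\in\mathbb Z}$ a full orbit. Then $1\in\mathrm{Per}(\bar x)$, and $\mathrm{Per}(\bar x)$ is closed under taking (positive) divisors and least common multiples: if $k\in\mathrm{Per}(\bar x)$ and $d\mid k$ then $d\in\mathrm{Per}(\bar x)$, and if $m,n\in\mathrm{Per}(\bar x)$ then $\operatorname{lcm}(m,n)\in\mathrm{Per}(\bar x)$.
   Context: A full orbit is a sequence $\bar x=(x_i)_{i\in\mathbb Z}$ in $X$ with $f(x_i)=x_{i+1}$ for all $i$. $2^X$ is the space of nonempty closed subsets of $X$ with the Hausdorff metric, $2^f(C)=f(C)$. $\mathrm{Per}(\bar x)$ is the set of $k\in\mathbb N$ such that $\overline{\{x_{mk}:m\in\mathbb Z\}}$ is a periodic point of $2^f$ with fundamental period $k$. *)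

theory Defs
  imports "HOL-Analysis.Analysis"
begin

definition full_orbit :: "'a set \<Rightarrow> ('a \<Rightarrow> 'a) \<Rightarrow> (int \<Rightarrow> 'a) \<Rightarrow> bool" where
  "full_orbit X f x \<longleftrightarrow> (\<forall>i. x i \<in> X \<and> f (x i) = x (i + 1))"

definition induced_map :: "('a \<Rightarrow> 'a) \<Rightarrow> 'a set \<Rightarrow> 'a set" where
  "induced_map f C = f ` C"

definition periodic_with_fundamental_period :: "('b \<Rightarrow> 'b) \<Rightarrow> 'b \<Rightarrow> nat \<Rightarrow> bool" where
  "periodic_with_fundamental_period g C k \<longleftrightarrow>
     k > 0 \<and> (g ^^ k) C = C \<and> (\<forall>j. 0 < j \<and> j < k \<longrightarrow> (g ^^ j) C \<noteq> C)"

definition sub_orbit_closure :: "(int \<Rightarrow> 'a::topological_space) \<Rightarrow> nat \<Rightarrow> 'a set" where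
  "sub_orbit_closure x k = closure (range (\<lambda>m::int. x (m * int k)))"

definition Per :: "('a::topological_space \<Rightarrow> 'a) \<Rightarrow> (int \<Rightarrow> 'a) \<Rightarrow> nat set" where
  "Per f x = {k. periodic_with_fundamental_period (induced_map f) (sub_orbit_closure x k) k}"

end

theory Submission
  imports Defs
begin

definition CC :: "(int \<Rightarrow> 'a::topological_space) \<Rightarrow> nat \<Rightarrow> int \<Rightarrow> 'a set" where
  "CC x k c = closure (range (\<lambda>m::int. x (m * int k + c)))"

lemma CC_shift: "CC x k (c + a * int k) = CC x k c"
proof -
  have "range (\<lambda>m::int. x (m * int k + (c + a * int k))) = range (\<lambda>m::int. x (m * int k + c))"
  proof (intro equalityI subsetI)
    fix y assume "y \<in> range (\<lambda>m::int. x (m * int k + (c + a * int k)))"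
    then obtain m where "y = x (m * int k + (c + a * int k))" by auto
    then have "y = x ((m + a) * int k + c)" by (simp add: algebra_simps)
    then show "y \<in> range (\<lambda>m::int. x (m * int k + c))" by blast
  next
    fix y assume "y \<in> range (\<lambda>m::int. x (m * int k + c))"
    then obtain m where "y = x (m * int k + c)" by auto
    then have "y = x ((m - a) * int k + (c + a * int k))" by (simp add: algebra_simps)
    then show "y \<in> range (\<lambda>m::int. x (m * int k + (c + a * int k)))" by blast
  qed
  then show ?thesis by (simp add: CC_def)
qed

lemma CC_mod: "CC x k c = CC x k (c mod int k)"
proof -
  have "CC x k (c mod int k + c div int k * int k) = CC x k (c mod int k)" by (rule CC_shift)
  moreover have "c mod int k + c div int k * int k = c" by (rule mod_div_mult_eq)
  ultimately show ?thesis by simp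
qed

lemma CC_mem: "x i \<in> CC x k i"
proof -
  have "x i \<in> range (\<lambda>m::int. x (m * int k + i))" by (rule range_eqI[of _ _ 0]) simp
  then show ?thesis unfolding CC_def by (meson closure_subset subsetD)
qed

lemma CC_sub0: "sub_orbit_closure x k = CC x k 0"
  by (simp add: sub_orbit_closure_def CC_def)

lemma CC_dvd: assumes "m dvd L" shows "CC x L c \<subseteq> CC x m c"
proof -
  obtain q where L: "L = m * q" using assms by auto
  have "range (\<lambda>a::int. x (a * int L + c)) \<subseteq> range (\<lambda>a::int. x (a * int m + c))"
  proof
    fix y assume "y \<in> range (\<lambda>a::int. x (a * int L + c))"
    then obtain a where "y = x (a * int L + c)" by auto
    then have "y = x ((a * int q) * int m + c)" by (simp add: L algebra_simps)
    then show "y \<in> range (\<lambda>a::int. x (a * int m + c))" by blast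
  qed
  then show ?thesis unfolding CC_def by (rule closure_mono)
qed

lemma img_closure:
  fixes X :: "'a::metric_space set" and f :: "'a \<Rightarrow> 'a"
  assumes "compact X" "continuous_on X f" "A \<subseteq> X"
  shows "f ` closure A = closure (f ` A)"
proof
  have cX: "closure A \<subseteq> X"
    by (rule closure_minimal[OF assms(3) compact_imp_closed[OF assms(1)]])
  have ct: "continuous_on (closure A) f" by (rule continuous_on_subset[OF assms(2) cX])
  show "f ` closure A \<subseteq> closure (f ` A)"
    by (rule image_closure_subset[OF ct closed_closure closure_subset])
  have "compact (X \<inter> closure A)" by (rule compact_Int_closed[OF assms(1) closed_closure])
  moreover have "X \<inter> closure A = closure A" using cX by blast
  ultimately have "compact (closure A)" by simp
  then have "compact (f ` closure A)" by (rule compact_continuous_image[OF ct])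
  then have "closed (f ` closure A)" by (rule compact_imp_closed)
  moreover have "f ` A \<subseteq> f ` closure A" by (rule image_mono[OF closure_subset])
  ultimately show "closure (f ` A) \<subseteq> f ` closure A" by (rule closure_minimal[rotated])
qed

locale orb =
  fixes X :: "'a::metric_space set" and f :: "'a \<Rightarrow> 'a" and x :: "int \<Rightarrow> 'a"
  assumes cX: "compact X" and cf: "continuous_on X f" and fX: "f ` X \<subseteq> X"
    and fo: "full_orbit X f x"
begin

lemma xX: "x i \<in> X" using fo by (simp add: full_orbit_def)
lemma fx: "f (x i) = x (i + 1)" using fo by (simp add: full_orbit_def)

lemma step: "induced_map f (CC x k c) = CC x k (c + 1)"
proof -
  have "induced_map f (CC x k c) = closure (f ` range (\<lambda>m::int. x (m * int k + c)))"
    unfolding induced_map_def CC_def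
    by (rule img_closure[OF cX cf]) (auto simp: xX)
  also have "f ` range (\<lambda>m::int. x (m * int k + c)) = range (\<lambda>m::int. x (m * int k + (c + 1)))"
    by (auto simp: fx image_comp add.assoc)
  finally show ?thesis by (simp add: CC_def)
qed

lemma steps: "(induced_map f ^^ j) (CC x k c) = CC x k (c + int j)"
  by (induction j) (auto simp: step algebra_simps)

lemma mem_steps: "x i \<in> CC x k c \<Longrightarrow> x (i + int t) \<in> CC x k (c + int t)"
proof (induction t)
  case 0 then show ?case by simp
next
  case (Suc t)
  then have "f (x (i + int t)) \<in> induced_map f (CC x k (c + int t))"
    by (simp add: induced_map_def)
  then show ?case by (simp add: step fx algebra_simps)
qed

lemma Per_iff: "k \<in> Per f x \<longleftrightarrow> k > 0 \<and> (\<forall>j. 0 < j \<and> j < k \<longrightarrow> CC x k (int j) \<noteq> CC x k 0)"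
proof -
  have "(induced_map f ^^ k) (CC x k 0) = CC x k 0"
    using steps[of k k 0] CC_shift[of x k 0 1] by simp
  then show ?thesis
    by (simp add: Per_def periodic_with_fundamental_period_def CC_sub0 steps)
qed

lemma mono_steps: "A \<subseteq> B \<Longrightarrow> (induced_map f ^^ j) A \<subseteq> (induced_map f ^^ j) B"
  by (induction j) (auto simp: induced_map_def)

lemma lemA:
  assumes k: "k \<in> Per f x" and h: "\<forall>i. x i \<in> CC x k (i + r)"
  shows "int k dvd r"
proof -
  have kp: "k > 0" and fund: "\<forall>j. 0 < j \<and> j < k \<longrightarrow> CC x k (int j) \<noteq> CC x k 0"
    using k Per_iff by auto
  define r' where "r' = nat (r mod int k)"
  have r'r: "int r' = r mod int k" using kp by (simp add: r'_def)
  have r'k: "r' < k" using kp by (simp add: r'_def nat_less_iff)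
  have "CC x k 0 \<subseteq> CC x k r"
    unfolding CC_def[of x k 0]
  proof (rule closure_minimal)
    show "closed (CC x k r)" by (simp add: CC_def)
    show "range (\<lambda>m. x (m * int k + 0)) \<subseteq> CC x k r"
    proof
      fix y assume "y \<in> range (\<lambda>m. x (m * int k + 0))"
      then obtain m where y: "y = x (m * int k)" by auto
      have "x (m * int k) \<in> CC x k (m * int k + r)" using h by simp
      then show "y \<in> CC x k r" using CC_shift[of x k r m] y by (simp add: add.commute)
    qed
  qed
  then have base: "CC x k 0 \<subseteq> CC x k (int r')" using CC_mod[of x k r] r'r by simp
  have gen: "CC x k 0 \<subseteq> CC x k (int (i * r'))" for i
  proof (induction i)
    case 0 then show ?case by simp
  next
    case (Suc i)
    have "(induced_map f ^^ (i * r')) (CC x k 0) \<subseteq> (induced_map f ^^ (i * r')) (CC x k (int r'))"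
      by (rule mono_steps[OF base])
    then have "CC x k (int (i * r')) \<subseteq> CC x k (int (Suc i * r'))"
      by (simp add: steps algebra_simps)
    with Suc show ?case by blast
  qed
  have "(induced_map f ^^ r') (CC x k 0) \<subseteq> (induced_map f ^^ r') (CC x k (int ((k - 1) * r')))"
    by (rule mono_steps[OF gen])
  then have "CC x k (int r') \<subseteq> CC x k (int (k * r'))"
    using kp by (simp add: steps algebra_simps of_nat_diff)
  also have "CC x k (int (k * r')) = CC x k 0"
    using CC_shift[of x k 0 "int r'"] by (simp add: algebra_simps)
  finally have "CC x k (int r') = CC x k 0" using base by blast
  with fund r'k have "r' = 0" by (metis gr0I)
  then show ?thesis using r'r by (simp add: dvd_eq_mod_eq_0)
qed

lemma period_shift:
  assumes "d > 0" "CC x d (int j) = CC x d 0"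
  shows "CC x d (i + int j) = CC x d i"
proof -
  define a where "a = nat (i mod int d)"
  have a: "int a = i mod int d" using assms(1) by (simp add: a_def)
  have "CC x d i = CC x d (int a)" using CC_mod[of x d i] a by simp
  also have "\<dots> = (induced_map f ^^ a) (CC x d 0)" by (simp add: steps)
  also have "\<dots> = (induced_map f ^^ a) (CC x d (int j))" using assms(2) by simp
  also have "\<dots> = CC x d (int a + int j)" by (simp add: steps add.commute)
  also have "\<dots> = CC x d ((int a + int j) mod int d)" by (rule CC_mod)
  also have "(int a + int j) mod int d = (i + int j) mod int d"
    unfolding a by (rule mod_add_left_eq)
  also have "CC x d ((i + int j) mod int d) = CC x d (i + int j)" by (rule CC_mod[symmetric])
  finally show ?thesis by (rule sym)
qed

end

lemma (in orb) part2:
  assumes k: "k \<in> Per f x" and dk: "d dvd k"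
  shows "d \<in> Per f x"
proof -
  have kp: "k > 0" using k Per_iff by auto
  then have dp: "d > 0" using dk by (simp add: dvd_pos_nat)
  obtain q where kq: "k = d * q" using dk by auto
  have qp: "q > 0" using kp kq by simp
  have split: "CC x d c \<subseteq> (\<Union>s\<in>{..<q}. CC x k (c + int s * int d))" for c
    unfolding CC_def[of x d c]
  proof (rule closure_minimal)
    show "closed (\<Union>s\<in>{..<q}. CC x k (c + int s * int d))"
      by (intro closed_UN) (auto simp: CC_def)
    show "range (\<lambda>m. x (m * int d + c)) \<subseteq> (\<Union>s\<in>{..<q}. CC x k (c + int s * int d))"
    proof
      fix y assume "y \<in> range (\<lambda>m. x (m * int d + c))"
      then obtain m where y: "y = x (m * int d + c)" by auto
      define s where "s = nat (m mod int q)"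
      have s: "int s = m mod int q" using qp by (simp add: s_def)
      have sq: "s < q" using qp by (simp add: s_def nat_less_iff)
      have "m * int d + c = (m div int q) * int k + (c + int s * int d)"
      proof -
        define a where "a = m div int q"
        have e: "m = a * int q + int s" by (simp add: a_def s)
        show ?thesis unfolding a_def[symmetric] kq by (simp add: e algebra_simps)
      qed
      then have "y = x ((m div int q) * int k + (c + int s * int d))" using y by (simp add: ac_simps)
      then have "y \<in> CC x k (c + int s * int d)"
        unfolding CC_def by (meson closure_subset rangeI subsetD)
      then show "y \<in> (\<Union>s\<in>{..<q}. CC x k (c + int s * int d))" using sq by blast
    qed
  qed
  show ?thesis unfolding Per_iff
  proof (intro conjI dp allI impI notI)
    fix j assume j: "0 < j \<and> j < d" and eq: "CC x d (int j) = CC x d 0"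
    have xin: "x i \<in> CC x d (i + int j)" for i
      using period_shift[OF dp eq, of i] CC_mem[of x i d] by simp
    have ex: "\<exists>s. s < q \<and> x (- int N) \<in> CC x k (- int N + int j + int s * int d)" for N
      using split[of "- int N + int j"] xin[of "- int N"] by auto
    define sf where "sf N = (SOME s. s < q \<and> x (- int N) \<in> CC x k (- int N + int j + int s * int d))" for N
    have sf: "sf N < q \<and> x (- int N) \<in> CC x k (- int N + int j + int (sf N) * int d)" for N
      unfolding sf_def by (rule someI_ex[OF ex])
    have "finite (sf ` UNIV)" by (rule finite_subset[of _ "{..<q}"]) (use sf in auto)
    then obtain N0 where inf: "infinite {N. sf N = sf N0}"
      using pigeonhole_infinite[of "UNIV::nat set" sf] by auto
    define r where "r = int j + int (sf N0) * int d"
    have all: "x i \<in> CC x k (i + r)" for i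
    proof -
      obtain N where N: "N \<in> {N. sf N = sf N0}" "nat (- i) \<le> N"
        using inf unfolding infinite_nat_iff_unbounded_le by blast
      have hN: "x (- int N) \<in> CC x k (- int N + r)" using sf[of N] N(1) by (simp add: r_def algebra_simps)
      have nn: "int (nat (i + int N)) = i + int N" using N(2) by linarith
      from mem_steps[OF hN, of "nat (i + int N)"]
      show ?thesis unfolding nn by (simp add: algebra_simps)
    qed
    have "int k dvd r" by (rule lemA[OF k]) (use all in blast)
    then have "int d dvd r" using dk dvd_trans[of "int d" "int k" r] by simp
    then have "int d dvd int j" unfolding r_def by (simp add: dvd_add_left_iff)
    then have "d dvd j" by simp
    with j show False by (meson nat_dvd_not_less)
  qed
qed

lemma (in orb) part3:
  assumes m: "m \<in> Per f x" and n: "n \<in> Per f x"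
  shows "lcm m n \<in> Per f x"
proof -
  have mp: "m > 0" using m by (simp add: Per_iff)
  have np: "n > 0" using n by (simp add: Per_iff)
  have Lp: "lcm m n > 0" using mp np by (simp add: lcm_pos_nat)
  show ?thesis unfolding Per_iff
  proof (intro conjI Lp allI impI notI)
    fix j assume j: "0 < j \<and> j < lcm m n" and eq: "CC x (lcm m n) (int j) = CC x (lcm m n) 0"
    have xin: "x i \<in> CC x (lcm m n) (i + int j)" for i
      using period_shift[OF Lp eq, of i] CC_mem[of x i "lcm m n"] by simp
    have hm: "\<forall>i. x i \<in> CC x m (i + int j)"
    proof
      fix i show "x i \<in> CC x m (i + int j)"
      proof -
        have "CC x (lcm m n) (i + int j) \<subseteq> CC x m (i + int j)" by (rule CC_dvd) simp
        then show ?thesis using xin[of i] by blast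
      qed
    qed
    have hn: "\<forall>i. x i \<in> CC x n (i + int j)"
    proof
      fix i show "x i \<in> CC x n (i + int j)"
      proof -
        have "CC x (lcm m n) (i + int j) \<subseteq> CC x n (i + int j)" by (rule CC_dvd) simp
        then show ?thesis using xin[of i] by blast
      qed
    qed
    have "int m dvd int j" by (rule lemA[OF m hm])
    then have "m dvd j" by (simp only: int_dvd_int_iff)
    moreover have "int n dvd int j" by (rule lemA[OF n hn])
    then have "n dvd j" by (simp only: int_dvd_int_iff)
    ultimately have "lcm m n dvd j" by (rule lcm_least)
    then have "lcm m n \<le> j" using j by (simp add: dvd_imp_le)
    with j show False by simp
  qed
qed

theorem proposition4p7:
  fixes X :: "'a::metric_space set" and f :: "'a \<Rightarrow> 'a" and x :: "int \<Rightarrow> 'a"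
  assumes "compact X" and "continuous_on X f" and "f ` X \<subseteq> X"
    and "full_orbit X f x"
  shows "1 \<in> Per f x
    \<and> (\<forall>k d. k \<in> Per f x \<longrightarrow> d dvd k \<longrightarrow> d \<in> Per f x)
    \<and> (\<forall>m n. m \<in> Per f x \<longrightarrow> n \<in> Per f x \<longrightarrow> lcm m n \<in> Per f x)"
proof -
  interpret orb X f x by (rule orb.intro[OF assms])
  have "1 \<in> Per f x" unfolding Per_iff by auto
  moreover have "\<forall>k d. k \<in> Per f x \<longrightarrow> d dvd k \<longrightarrow> d \<in> Per f x"
    using part2 by blast
  moreover have "\<forall>m n. m \<in> Per f x \<longrightarrow> n \<in> Per f x \<longrightarrow> lcm m n \<in> Per f x"
    using part3 by blast
  ultimately show ?thesis by blast
qed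

end
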